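(* Let $d>0$ and let $\tilde V\in C^1([-\tfrac d2,\tfrac d2])$ be even. Let $\tilde\lambda_1<\tilde\lambda_2$ be the first two eigenvalues and $\tilde\phi_1>0$ the first eigenfunction of $-\tilde u''+\tilde V\tilde u=\tilde\lambda\tilde u$ on $(-\tfrac d2,\tfrac d2)$, $\tilde u(\pm\tfrac d2)=0$. Set $\tilde\alpha:=-\sup_{\tau\in(-\frac d2,\frac d2)}(\log\tilde\phi_1)''(\tau)$. Then for every $s\in(0,1)$, $$\tilde\lambda_2-\tilde\lambda_1\ \ge\ 4s(1-s)\frac{\pi^2}{d^2}+2s\tilde\alpha,$$ and $$\tilde\lambda_2\ \ge\ (1+2s)\tilde\lambda_1+4s(1-s)\frac{\pi^2}{d^2}+2s\inf_{(-\frac d2,\frac d2)}\Big[\big(\tilde\phi_1'/\tilde\phi_1\big)^2-\tilde V\Big].$$ *)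

theory Defs
  imports "HOL-Analysis.Analysis"
begin

definition dirichlet_eigenfunction ::
  "(real \<Rightarrow> real) \<Rightarrow> real \<Rightarrow> real \<Rightarrow> (real \<Rightarrow> real) \<Rightarrow> bool" where
  "dirichlet_eigenfunction V d lam u \<longleftrightarrow>
     continuous_on {-d/2..d/2} u \<and> u (-d/2) = 0 \<and> u (d/2) = 0 \<and>
     (\<exists>x\<in>{-d/2<..<d/2}. u x \<noteq> 0) \<and>
     (\<forall>x\<in>{-d/2<..<d/2}. u differentiable at x \<and> deriv u differentiable at x \<and>
        - deriv (deriv u) x + V x * u x = lam * u x)"

definition dirichlet_eigenvalue :: "(real \<Rightarrow> real) \<Rightarrow> real \<Rightarrow> real \<Rightarrow> bool" where
  "dirichlet_eigenvalue V d lam \<longleftrightarrow> (\<exists>u. dirichlet_eigenfunction V d lam u)"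

definition first_dirichlet_eigenvalue :: "(real \<Rightarrow> real) \<Rightarrow> real \<Rightarrow> real \<Rightarrow> bool" where
  "first_dirichlet_eigenvalue V d lam1 \<longleftrightarrow>
     dirichlet_eigenvalue V d lam1 \<and> (\<forall>mu. dirichlet_eigenvalue V d mu \<longrightarrow> lam1 \<le> mu)"

definition second_dirichlet_eigenvalue :: "(real \<Rightarrow> real) \<Rightarrow> real \<Rightarrow> real \<Rightarrow> bool" where
  "second_dirichlet_eigenvalue V d lam2 \<longleftrightarrow>
     (\<exists>lam1. first_dirichlet_eigenvalue V d lam1 \<and> lam1 < lam2 \<and>
        dirichlet_eigenvalue V d lam2 \<and>
        (\<forall>mu. dirichlet_eigenvalue V d mu \<and> lam1 < mu \<longrightarrow> lam2 \<le> mu))"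

end

theory Submission
  imports Defs
begin


lemma lip_bound:
  fixes f f' :: "real \<Rightarrow> real"
  assumes "a \<le> b" "continuous_on {a..b} f"
    "\<And>x. x \<in> {a<..<b} \<Longrightarrow> (f has_real_derivative f' x) (at x)"
    "\<And>x. x \<in> {a<..<b} \<Longrightarrow> \<bar>f' x\<bar> \<le> M"
  shows "\<bar>f b - f a\<bar> \<le> M * (b - a)"
proof (cases "a = b")
  case True then show ?thesis by simp
next
  case False
  then have ab: "a < b" using assms(1) by simp
  obtain l z where z: "a < z" "z < b" "DERIV f z :> l" "f b - f a = (b - a) * l"
    using MVT[OF ab assms(2)] assms(3) real_differentiable_def by fastforce
  have "l = f' z" using z assms(3)[of z] DERIV_unique by auto
  then have "\<bar>l\<bar> \<le> M" using assms(4)[of z] z by auto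
  then show ?thesis using z(4) ab
    by (simp add: abs_mult mult.commute mult_right_mono)
qed

lemma cont_bounded:
  fixes f :: "real \<Rightarrow> real"
  assumes "continuous_on {a..b} f"
  shows "\<exists>M. \<forall>x\<in>{a..b}. \<bar>f x\<bar> \<le> M"
proof -
  have "compact (f ` {a..b})" using compact_continuous_image[OF assms] by simp
  then have "bounded (f ` {a..b})" by (rule compact_imp_bounded)
  then show ?thesis unfolding bounded_iff by auto
qed

lemma deriv_cont_sub:
  fixes f f' :: "real \<Rightarrow> real"
  assumes "\<And>x. x \<in> S \<Longrightarrow> (f has_real_derivative f' x) (at x)" "T \<subseteq> S"
  shows "continuous_on T f"
  by (meson assms has_real_derivative_imp_continuous_on continuous_on_subset subsetD)

lemma le_lim_right:
  fixes a b K x R :: real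
  assumes "x < R" "K \<ge> 0" "\<And>y. x < y \<Longrightarrow> y < R \<Longrightarrow> a \<le> b + K * (R - y)"
  shows "a \<le> b"
proof (rule ccontr)
  assume "\<not> a \<le> b"
  define t where "t = min ((a - b) / (2 * (K + 1))) ((R - x) / 2)"
  have t0: "t \<le> (R - x) / 2" unfolding t_def by (rule min.cobounded2)
  have t: "t > 0" "t < R - x" using \<open>\<not> a \<le> b\<close> assms t0 unfolding t_def by auto
  have "a \<le> b + K * t" using assms(3)[of "R - t"] t by auto
  moreover have "K * t \<le> (K + 1) * ((a - b) / (2 * (K + 1)))"
    using t assms(2) unfolding t_def
    by (intro mult_mono) auto
  moreover have "(K + 1) * ((a - b) / (2 * (K + 1))) = (a - b) / 2"
    using assms(2) by (simp add: field_simps)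
  ultimately have "a \<le> b + (a - b) / 2" by linarith
  then show False using \<open>\<not> a \<le> b\<close> by (simp add: field_simps)
qed



lemma end_bound_lin:
  fixes f f' :: "real \<Rightarrow> real"
  assumes "continuous_on {L..R} f" "f R = 0" "x \<in> {L<..<R}"
    "\<And>x. x \<in> {L<..<R} \<Longrightarrow> (f has_real_derivative f' x) (at x)"
    "\<And>x. x \<in> {L<..<R} \<Longrightarrow> \<bar>f' x\<bar> \<le> P"
  shows "\<bar>f x\<bar> \<le> P * (R - x)"
proof -
  have "\<bar>f R - f x\<bar> \<le> P * (R - x)"
    apply (rule lip_bound[where f'=f'])
    using assms by (auto intro: continuous_on_subset[OF assms(1)])
  then show ?thesis using assms(2) by simp
qed

lemma end_right:
  fixes V ph ph' u u' :: "real \<Rightarrow> real" and L R l1 l2 P e :: real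
  assumes LR: "L < R"
  and phc: "continuous_on {L..R} ph" and uc: "continuous_on {L..R} u"
  and phR: "ph R = 0" and uR: "u R = 0"
  and dph: "\<And>x. x \<in> {L<..<R} \<Longrightarrow> (ph has_real_derivative ph' x) (at x)"
  and d2ph: "\<And>x. x \<in> {L<..<R} \<Longrightarrow> (ph' has_real_derivative (V x - l1) * ph x) (at x)"
  and du: "\<And>x. x \<in> {L<..<R} \<Longrightarrow> (u has_real_derivative u' x) (at x)"
  and d2u: "\<And>x. x \<in> {L<..<R} \<Longrightarrow> (u' has_real_derivative (V x - l2) * u x) (at x)"
  and pos: "\<And>x. x \<in> {L<..<R} \<Longrightarrow> ph x > 0"
  and bnd: "\<And>x. x \<in> {L<..<R} \<Longrightarrow> \<bar>ph' x\<bar> \<le> P \<and> \<bar>u' x\<bar> \<le> P \<and> \<bar>u x\<bar> \<le> P"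
  and E: "e > 0" "\<And>x. x \<in> {L<..<R} \<Longrightarrow> e \<le> (ph x)\<^sup>2 + (ph' x)\<^sup>2"
  shows "\<exists>\<eta>>0. \<exists>C. \<forall>x\<in>{L<..<R}. R - \<eta> < x \<longrightarrow>
           \<bar>u x\<bar> \<le> C * (R - x) \<and> \<bar>u' x - ph' x / ph x * u x\<bar> \<le> C * (R - x) \<and>
           \<bar>ph' x / ph x * (u' x - ph' x / ph x * u x)\<^sup>2\<bar> \<le> C * (R - x)"
proof -
  define c1 where "c1 = sqrt (e / 2)"
  have c1: "c1 > 0" "c1\<^sup>2 = e / 2" using E unfolding c1_def by auto
  have P0: "P \<ge> 0" using bnd[of "(L+R)/2"] LR by auto
  have ua: "\<bar>u x\<bar> \<le> P * (R - x)" if "x \<in> {L<..<R}" for x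
    by (rule end_bound_lin[OF uc uR that du]) (use bnd in auto)
  have pha: "\<bar>ph x\<bar> \<le> P * (R - x)" if "x \<in> {L<..<R}" for x
    by (rule end_bound_lin[OF phc phR that dph]) (use bnd in auto)
  obtain \<delta> where \<delta>: "\<delta> > 0" "\<And>x'. x' \<in> {L..R} \<Longrightarrow> dist x' R < \<delta> \<Longrightarrow> dist (ph x') (ph R) < c1"
    using phc c1(1) LR unfolding continuous_on_iff by (metis atLeastAtMost_iff order_le_less)
  define \<eta> where "\<eta> = min \<delta> (R - L)"
  have \<eta>: "\<eta> > 0" using \<delta> LR unfolding \<eta>_def by auto
  define W where "W y = u' y * ph y - ph' y * u y" for y
  have dW: "(W has_real_derivative (l1 - l2) * u y * ph y) (at y)" if "y \<in> {L<..<R}" for y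
  proof -
    have "(W has_real_derivative (u' y * ph' y + (V y - l2) * u y * ph y) - (ph' y * u' y + (V y - l1) * ph y * u y)) (at y)"
      unfolding W_def
      by (intro DERIV_diff DERIV_mult' dph du d2ph d2u that)
    moreover have "(u' y * ph' y + (V y - l2) * u y * ph y) - (ph' y * u' y + (V y - l1) * ph y * u y) = (l1 - l2) * u y * ph y"
      by (simp add: algebra_simps)
    ultimately show ?thesis by simp
  qed
  define C1 where "C1 = \<bar>l1 - l2\<bar> * P * P / c1"
  define C where "C = max P (max C1 (P * C1\<^sup>2 / c1))"
  have "\<forall>x\<in>{L<..<R}. R - \<eta> < x \<longrightarrow>
           \<bar>u x\<bar> \<le> C * (R - x) \<and> \<bar>u' x - ph' x / ph x * u x\<bar> \<le> C * (R - x) \<and>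
           \<bar>ph' x / ph x * (u' x - ph' x / ph x * u x)\<^sup>2\<bar> \<le> C * (R - x)"
  proof (intro ballI impI)
    fix x assume x: "x \<in> {L<..<R}" and xe: "R - \<eta> < x"
    have Rx: "R - x > 0" using x by auto
    have phlow: "ph x \<ge> c1 * (R - x)"
    proof -
      have "x < R" using x by auto
      obtain l z where z: "x < z" "z < R" "DERIV ph z :> l" "ph R - ph x = (R - x) * l"
        using MVT[OF \<open>x < R\<close> continuous_on_subset[OF phc]] dph x real_differentiable_def
        by (smt (verit, ccfv_threshold) atLeastAtMost_iff greaterThanLessThan_iff subsetI)
      have zI: "z \<in> {L<..<R}" using z x by auto
      have "l = ph' z" using z dph[OF zI] DERIV_unique by auto
      have "dist z R < \<delta>" using z xe unfolding \<eta>_def dist_real_def by auto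
      then have "\<bar>ph z\<bar> < c1" using \<delta>(2)[of z] zI phR by (auto simp: dist_real_def)
      then have "\<bar>ph z\<bar>\<^sup>2 < c1\<^sup>2" by (intro power_strict_mono) auto
      then have "(ph z)\<^sup>2 < c1\<^sup>2" by simp
      then have "(ph' z)\<^sup>2 > c1\<^sup>2" using E(2)[OF zI] c1 by linarith
      then have "\<bar>ph' z\<bar> > c1" using c1 by (meson abs_ge_self less_le_trans order_le_less_trans power2_less_imp_less real_sqrt_abs real_sqrt_less_iff not_less abs_le_square_iff)
      moreover have "ph x = (R - x) * (- l)" using z phR by (simp add: algebra_simps)
      moreover have "ph x > 0" using pos x by auto
      ultimately have "- l > 0" using Rx by (metis zero_less_mult_iff not_less_iff_gr_or_eq)
      then have "ph x = (R - x) * \<bar>l\<bar>" using \<open>ph x = (R - x) * (- l)\<close> by simp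
      then show ?thesis using \<open>l = ph' z\<close> \<open>\<bar>ph' z\<bar> > c1\<close> Rx by (simp add: mult.commute mult_left_mono)
    qed
    have Wb: "\<bar>W x\<bar> \<le> \<bar>l1 - l2\<bar> * P * P * (R - x) * (R - x)"
    proof (rule le_lim_right[of x R "2 * P * P"])
      show "x < R" using x by auto
      show "0 \<le> 2 * P * P" using P0 by simp
      fix y assume y: "x < y" "y < R"
      have yI: "y \<in> {L<..<R}" using x y by auto
      have "\<bar>W y - W x\<bar> \<le> (\<bar>l1 - l2\<bar> * P * P * (R - x)) * (y - x)"
      proof (rule lip_bound)
        show "x \<le> y" using y by simp
        show "continuous_on {x..y} W"
          by (rule deriv_cont_sub[where S="{L<..<R}"]) (use dW x y in auto)
        show "(W has_real_derivative (l1 - l2) * u t * ph t) (at t)" if "t \<in> {x<..<y}" for t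
          using dW that x y by auto
        show "\<bar>(l1 - l2) * u t * ph t\<bar> \<le> \<bar>l1 - l2\<bar> * P * P * (R - x)" if "t \<in> {x<..<y}" for t
        proof -
          have tI: "t \<in> {L<..<R}" using that x y by auto
          have "\<bar>u t\<bar> \<le> P" using bnd[OF tI] by auto
          moreover have "\<bar>ph t\<bar> \<le> P * (R - x)"
            using pha[OF tI] that P0 by (smt (verit) greaterThanLessThan_iff mult_left_mono)
          ultimately have "\<bar>u t\<bar> * \<bar>ph t\<bar> \<le> P * (P * (R - x))"
            by (intro mult_mono) auto
          then show ?thesis by (simp add: abs_mult mult.assoc mult_left_mono)
        qed
      qed
      moreover have "\<bar>W y\<bar> \<le> P * \<bar>ph y\<bar> + P * \<bar>u y\<bar>"
      proof -
        have "\<bar>W y\<bar> \<le> \<bar>u' y\<bar> * \<bar>ph y\<bar> + \<bar>ph' y\<bar> * \<bar>u y\<bar>"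
          unfolding W_def by (metis abs_mult abs_triangle_ineq4)
        also have "\<dots> \<le> P * \<bar>ph y\<bar> + P * \<bar>u y\<bar>"
          using bnd[OF yI] by (intro add_mono mult_right_mono) auto
        finally show ?thesis .
      qed
      moreover have "P * \<bar>ph y\<bar> \<le> P * (P * (R - y))" using pha[OF yI] P0 by (rule mult_left_mono)
      moreover have "P * \<bar>u y\<bar> \<le> P * (P * (R - y))" using ua[OF yI] P0 by (rule mult_left_mono)
      moreover have "(\<bar>l1 - l2\<bar> * P * P * (R - x)) * (y - x) \<le> \<bar>l1 - l2\<bar> * P * P * (R - x) * (R - x)"
        using y P0 Rx by (intro mult_left_mono) auto
      ultimately show "\<bar>W x\<bar> \<le> \<bar>l1 - l2\<bar> * P * P * (R - x) * (R - x) + 2 * P * P * (R - y)"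
        by (simp add: algebra_simps) linarith
    qed
    have phx: "ph x > 0" using pos x by auto
    have psiW: "u' x - ph' x / ph x * u x = W x / ph x"
      unfolding W_def using phx by (simp add: field_simps)
    have psib: "\<bar>u' x - ph' x / ph x * u x\<bar> \<le> C1 * (R - x)"
    proof -
      have "\<bar>W x / ph x\<bar> = \<bar>W x\<bar> / ph x" using phx by simp
      also have "\<dots> \<le> (\<bar>l1 - l2\<bar> * P * P * (R - x) * (R - x)) / (c1 * (R - x))"
        using Wb phlow c1 Rx by (intro frac_le) auto
      also have "\<dots> = C1 * (R - x)" unfolding C1_def using c1 Rx by (simp add: field_simps)
      finally show ?thesis using psiW by simp
    qed
    have C1: "C1 \<ge> 0" unfolding C1_def using c1 P0 by simp
    have qb: "\<bar>ph' x / ph x * (u' x - ph' x / ph x * u x)\<^sup>2\<bar> \<le> (P * C1\<^sup>2 / c1) * (R - x)"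
    proof -
      have "\<bar>ph' x / ph x * (u' x - ph' x / ph x * u x)\<^sup>2\<bar> = \<bar>ph' x\<bar> * (u' x - ph' x / ph x * u x)\<^sup>2 / ph x"
        using phx by (simp add: abs_mult)
      also have "\<dots> \<le> P * (C1 * (R - x))\<^sup>2 / (c1 * (R - x))"
      proof (intro frac_le mult_mono)
        show "(u' x - ph' x / ph x * u x)\<^sup>2 \<le> (C1 * (R - x))\<^sup>2"
          using power_mono[OF psib abs_ge_zero, of 2] by simp
      qed (use bnd[OF x] phlow c1 Rx P0 in auto)
      also have "\<dots> = (P * C1\<^sup>2 / c1) * (R - x)" using c1 Rx by (simp add: field_simps power2_eq_square)
      finally show ?thesis .
    qed
    have "C \<ge> P" "C \<ge> C1" "C \<ge> P * C1\<^sup>2 / c1" unfolding C_def by auto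
    then show "\<bar>u x\<bar> \<le> C * (R - x) \<and> \<bar>u' x - ph' x / ph x * u x\<bar> \<le> C * (R - x) \<and>
           \<bar>ph' x / ph x * (u' x - ph' x / ph x * u x)\<^sup>2\<bar> \<le> C * (R - x)"
      using ua[OF x] psib qb Rx
      by (meson mult_right_mono order_trans less_imp_le)
  qed
  then show ?thesis using \<eta> by blast
qed



lemma end_left:
  fixes V ph ph' u u' :: "real \<Rightarrow> real" and L R l1 l2 P e :: real
  assumes LR: "L < R"
  and phc: "continuous_on {L..R} ph" and uc: "continuous_on {L..R} u"
  and phL: "ph L = 0" and uL: "u L = 0"
  and dph: "\<And>x. x \<in> {L<..<R} \<Longrightarrow> (ph has_real_derivative ph' x) (at x)"
  and d2ph: "\<And>x. x \<in> {L<..<R} \<Longrightarrow> (ph' has_real_derivative (V x - l1) * ph x) (at x)"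
  and du: "\<And>x. x \<in> {L<..<R} \<Longrightarrow> (u has_real_derivative u' x) (at x)"
  and d2u: "\<And>x. x \<in> {L<..<R} \<Longrightarrow> (u' has_real_derivative (V x - l2) * u x) (at x)"
  and pos: "\<And>x. x \<in> {L<..<R} \<Longrightarrow> ph x > 0"
  and bnd: "\<And>x. x \<in> {L<..<R} \<Longrightarrow> \<bar>ph' x\<bar> \<le> P \<and> \<bar>u' x\<bar> \<le> P \<and> \<bar>u x\<bar> \<le> P"
  and E: "e > 0" "\<And>x. x \<in> {L<..<R} \<Longrightarrow> e \<le> (ph x)\<^sup>2 + (ph' x)\<^sup>2"
  shows "\<exists>\<eta>>0. \<exists>C. \<forall>x\<in>{L<..<R}. x < L + \<eta> \<longrightarrow>
           \<bar>u x\<bar> \<le> C * (x - L) \<and> \<bar>u' x - ph' x / ph x * u x\<bar> \<le> C * (x - L) \<and>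
           \<bar>ph' x / ph x * (u' x - ph' x / ph x * u x)\<^sup>2\<bar> \<le> C * (x - L)"
proof -
  have mem: "- y \<in> {L<..<R}" if "y \<in> {-R<..<-L}" for y using that by auto
  have cm: "continuous_on {-R..-L} (\<lambda>y. f (- y))" if "continuous_on {L..R} f" for f :: "real \<Rightarrow> real"
  proof -
    have "continuous_on {-R..-L} (f \<circ> uminus)"
      by (rule continuous_on_compose) (auto intro!: continuous_intros continuous_on_subset[OF that])
    then show ?thesis by (simp add: o_def)
  qed
  have mir: "((\<lambda>y. f (- y)) has_real_derivative - D) (at y)" if "(f has_real_derivative D) (at (- y))" for f D y
    using that DERIV_mirror by blast
  have "\<exists>\<eta>>0. \<exists>C. \<forall>y\<in>{-R<..<-L}. -L - \<eta> < y \<longrightarrow>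
           \<bar>u (- y)\<bar> \<le> C * (-L - y) \<and> \<bar>(- u' (- y)) - (- ph' (- y)) / ph (- y) * u (- y)\<bar> \<le> C * (-L - y) \<and>
           \<bar>(- ph' (- y)) / ph (- y) * ((- u' (- y)) - (- ph' (- y)) / ph (- y) * u (- y))\<^sup>2\<bar> \<le> C * (-L - y)"
  proof (rule end_right[where V="\<lambda>y. V (- y)" and ?l1.0=l1 and ?l2.0=l2 and P=P and e=e])
    show "- R < - L" using LR by simp
    show "continuous_on {-R..-L} (\<lambda>y. ph (- y))" by (rule cm[OF phc])
    show "continuous_on {-R..-L} (\<lambda>y. u (- y))" by (rule cm[OF uc])
    show "ph (- (- L)) = 0" "u (- (- L)) = 0" using phL uL by auto
    fix y assume y: "y \<in> {-R<..<-L}"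
    show "((\<lambda>y. ph (- y)) has_real_derivative - ph' (- y)) (at y)" by (rule mir, rule dph[OF mem[OF y]])
    show "((\<lambda>y. u (- y)) has_real_derivative - u' (- y)) (at y)" by (rule mir, rule du[OF mem[OF y]])
    show "((\<lambda>y. - ph' (- y)) has_real_derivative (V (- y) - l1) * ph (- y)) (at y)"
      using mir[OF d2ph[OF mem[OF y]]] DERIV_minus by fastforce
    show "((\<lambda>y. - u' (- y)) has_real_derivative (V (- y) - l2) * u (- y)) (at y)"
      using mir[OF d2u[OF mem[OF y]]] DERIV_minus by fastforce
    show "ph (- y) > 0" using pos[OF mem[OF y]] .
    show "\<bar>- ph' (- y)\<bar> \<le> P \<and> \<bar>- u' (- y)\<bar> \<le> P \<and> \<bar>u (- y)\<bar> \<le> P" using bnd[OF mem[OF y]] by simp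
    show "e \<le> (ph (- y))\<^sup>2 + (- ph' (- y))\<^sup>2" using E(2)[OF mem[OF y]] by simp
  qed (use E in auto)
  then obtain \<eta> C where \<eta>: "\<eta> > 0" and HC: "\<forall>y\<in>{-R<..<-L}. -L - \<eta> < y \<longrightarrow>
           \<bar>u (- y)\<bar> \<le> C * (-L - y) \<and> \<bar>(- u' (- y)) - (- ph' (- y)) / ph (- y) * u (- y)\<bar> \<le> C * (-L - y) \<and>
           \<bar>(- ph' (- y)) / ph (- y) * ((- u' (- y)) - (- ph' (- y)) / ph (- y) * u (- y))\<^sup>2\<bar> \<le> C * (-L - y)"
    by blast
  have "\<forall>x\<in>{L<..<R}. x < L + \<eta> \<longrightarrow>
           \<bar>u x\<bar> \<le> C * (x - L) \<and> \<bar>u' x - ph' x / ph x * u x\<bar> \<le> C * (x - L) \<and>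
           \<bar>ph' x / ph x * (u' x - ph' x / ph x * u x)\<^sup>2\<bar> \<le> C * (x - L)"
  proof (intro ballI impI)
    fix x assume x: "x \<in> {L<..<R}" "x < L + \<eta>"
    have "- x \<in> {-R<..<-L}" "-L - \<eta> < - x" using x by auto
    with HC have h: "\<bar>u (- (- x))\<bar> \<le> C * (-L - (- x)) \<and> \<bar>(- u' (- (- x))) - (- ph' (- (- x))) / ph (- (- x)) * u (- (- x))\<bar> \<le> C * (-L - (- x)) \<and>
           \<bar>(- ph' (- (- x))) / ph (- (- x)) * ((- u' (- (- x))) - (- ph' (- (- x))) / ph (- (- x)) * u (- (- x)))\<^sup>2\<bar> \<le> C * (-L - (- x))"
      by blast
    have e1: "\<bar>(- u' x) - (- ph' x) / ph x * u x\<bar> = \<bar>u' x - ph' x / ph x * u x\<bar>"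
      by (simp add: abs_minus_commute)
    have e2: "((- u' x) - (- ph' x) / ph x * u x)\<^sup>2 = (u' x - ph' x / ph x * u x)\<^sup>2"
      by (simp add: power2_commute)
    have e3: "\<bar>(- ph' x) / ph x * (u' x - ph' x / ph x * u x)\<^sup>2\<bar> = \<bar>ph' x / ph x * (u' x - ph' x / ph x * u x)\<^sup>2\<bar>"
      by (simp add: abs_mult)
    show "\<bar>u x\<bar> \<le> C * (x - L) \<and> \<bar>u' x - ph' x / ph x * u x\<bar> \<le> C * (x - L) \<and>
           \<bar>ph' x / ph x * (u' x - ph' x / ph x * u x)\<^sup>2\<bar> \<le> C * (x - L)"
      using h e1 e2 e3 by (simp add: algebra_simps)
  qed
  then show ?thesis using \<eta> by blast
qed



lemma interior_bounded:
  fixes f f' :: "real \<Rightarrow> real"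
  assumes "L < R" "\<And>x. x \<in> {L<..<R} \<Longrightarrow> (f has_real_derivative f' x) (at x)"
    "\<And>x. x \<in> {L<..<R} \<Longrightarrow> \<bar>f' x\<bar> \<le> M"
  shows "\<exists>P. \<forall>x\<in>{L<..<R}. \<bar>f x\<bar> \<le> P"
proof -
  define c where "c = (L + R) / 2"
  have c: "c \<in> {L<..<R}" using assms(1) unfolding c_def by auto
  have M0: "M \<ge> 0" using assms(3)[OF c] by auto
  have "\<bar>f x\<bar> \<le> \<bar>f c\<bar> + M * (R - L)" if x: "x \<in> {L<..<R}" for x
  proof -
    have "\<bar>f (max x c) - f (min x c)\<bar> \<le> M * (max x c - min x c)"
    proof (rule lip_bound[where f'=f'])
      show "min x c \<le> max x c" by simp
      show "continuous_on {min x c..max x c} f"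
        by (rule deriv_cont_sub[where S="{L<..<R}"]) (use assms(2) x c in \<open>auto simp: min_def max_def\<close>)
      fix y assume y: "y \<in> {min x c<..<max x c}"
      then have yI: "y \<in> {L<..<R}" using x c by (auto simp: min_def max_def split: if_splits)
      show "(f has_real_derivative f' y) (at y)" using assms(2)[OF yI] .
      show "\<bar>f' y\<bar> \<le> M" using assms(3)[OF yI] .
    qed
    moreover have "M * (max x c - min x c) \<le> M * (R - L)"
      using x c M0 by (intro mult_left_mono) (auto simp: min_def max_def)
    moreover have "\<bar>f (max x c) - f (min x c)\<bar> = \<bar>f x - f c\<bar>"
      by (cases "x \<le> c") (auto simp: max_def min_def abs_minus_commute)
    ultimately show ?thesis by linarith
  qed
  then show ?thesis by blast
qed

lemma gronwall_pos:
  fixes E E' :: "real \<Rightarrow> real"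
  assumes "L < R" "\<And>x. x \<in> {L<..<R} \<Longrightarrow> (E has_real_derivative E' x) (at x)"
    "\<And>x. x \<in> {L<..<R} \<Longrightarrow> E x > 0"
    "\<And>x. x \<in> {L<..<R} \<Longrightarrow> \<bar>E' x\<bar> \<le> K * E x"
  shows "\<exists>e>0. \<forall>x\<in>{L<..<R}. e \<le> E x"
proof -
  have "\<exists>P. \<forall>x\<in>{L<..<R}. \<bar>ln (E x)\<bar> \<le> P"
  proof (rule interior_bounded[where f'="\<lambda>x. E' x / E x" and M=K])
    show "L < R" by fact
    fix x assume x: "x \<in> {L<..<R}"
    show "((\<lambda>x. ln (E x)) has_real_derivative E' x / E x) (at x)"
      using assms(2,3)[OF x] by (auto intro!: derivative_eq_intros simp: field_simps)
    show "\<bar>E' x / E x\<bar> \<le> K"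
      using assms(3,4)[OF x] by (simp add: divide_le_eq)
  qed
  then obtain P where P: "\<And>x. x \<in> {L<..<R} \<Longrightarrow> \<bar>ln (E x)\<bar> \<le> P" by blast
  have "exp (- P) \<le> E x" if x: "x \<in> {L<..<R}" for x
  proof -
    have "- P \<le> ln (E x)" using P[OF x] by linarith
    then have "exp (- P) \<le> exp (ln (E x))" by simp
    then show ?thesis using assms(3)[OF x] by simp
  qed
  then show ?thesis by (intro exI[of _ "exp (- P)"]) auto
qed



lemma le_lim_left:
  fixes a b K x L :: real
  assumes "L < x" "K \<ge> 0" "\<And>y. L < y \<Longrightarrow> y < x \<Longrightarrow> a \<le> b + K * (y - L)"
  shows "a \<le> b"
proof (rule le_lim_right[of "- x" "- L" K])
  fix y assume "- x < y" "y < - L"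
  then show "a \<le> b + K * (- L - y)" using assms(3)[of "- y"] by (simp add: algebra_simps)
qed (use assms in auto)

lemma alg_identity:
  fixes s \<Gamma> u u' q psi psid qd h hd K \<beta> V l1 :: real
  assumes "u' = psi + q * u" "psid = - \<Gamma> * u - q * psi" "qd = V - l1 - q\<^sup>2" "hd = K + h\<^sup>2"
  shows "(- \<Gamma> * (u' * psi + u * psid) - 2 * s * (qd * psi\<^sup>2 + q * (2 * psi * psid))
           + 4 * s * (1 - s) * (hd * psi\<^sup>2 + h * (2 * psi * psid)))
         - ((4 * s * (1 - s) * K + 2 * s * \<beta>) - \<Gamma>) * psi\<^sup>2
       = ((1 - 2 * s) * psid + q * psi)\<^sup>2 + 4 * s * (1 - s) * (psid + h * psi)\<^sup>2
         + 2 * s * (- qd - \<beta>) * psi\<^sup>2"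
  unfolding assms by (simp add: power2_eq_square algebra_simps)

lemma G_bound:
  fixes U Ps Q H Hb C \<delta> W s \<Gamma> :: real
  assumes "\<bar>U\<bar> \<le> C * \<delta>" "\<bar>Ps\<bar> \<le> C * \<delta>" "\<bar>Q * Ps\<^sup>2\<bar> \<le> C * \<delta>" "\<bar>H\<bar> \<le> Hb"
    "0 < \<delta>" "\<delta> \<le> W" "0 < s" "s < 1" "\<Gamma> \<ge> 0"
  shows "\<bar>- \<Gamma> * U * Ps - 2 * s * Q * Ps\<^sup>2 + 4 * s * (1 - s) * H * Ps\<^sup>2\<bar>
         \<le> (\<Gamma> * C * C * W + 2 * s * C + 4 * s * (1 - s) * Hb * C * C * W) * \<delta>"
proof -
  have C0: "C \<ge> 0" using assms(1,5) by (meson abs_ge_zero order_trans zero_le_mult_iff not_le less_imp_le)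
  have Hb0: "Hb \<ge> 0" using assms(4) by linarith
  have a1: "\<bar>U * Ps\<bar> \<le> C * C * W * \<delta>"
  proof -
    have "\<bar>U * Ps\<bar> = \<bar>U\<bar> * \<bar>Ps\<bar>" by (rule abs_mult)
    also have "\<dots> \<le> (C * \<delta>) * (C * \<delta>)" using assms by (intro mult_mono) auto
    also have "\<dots> \<le> (C * W) * (C * \<delta>)" using assms C0 by (intro mult_mono) auto
    finally show ?thesis by (simp add: algebra_simps)
  qed
  have a2: "Ps\<^sup>2 \<le> C * C * W * \<delta>"
  proof -
    have "Ps\<^sup>2 = \<bar>Ps\<bar> * \<bar>Ps\<bar>" by (simp add: power2_eq_square abs_mult[symmetric])
    also have "\<dots> \<le> (C * \<delta>) * (C * \<delta>)" using assms by (intro mult_mono) auto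
    also have "\<dots> \<le> (C * W) * (C * \<delta>)" using assms C0 by (intro mult_mono) auto
    finally show ?thesis by (simp add: algebra_simps)
  qed
  have "\<bar>- \<Gamma> * U * Ps - 2 * s * Q * Ps\<^sup>2 + 4 * s * (1 - s) * H * Ps\<^sup>2\<bar>
        \<le> \<Gamma> * \<bar>U * Ps\<bar> + 2 * s * \<bar>Q * Ps\<^sup>2\<bar> + 4 * s * (1 - s) * (\<bar>H\<bar> * Ps\<^sup>2)"
  proof -
    have t: "\<bar>a - b + c\<bar> \<le> \<bar>a\<bar> + \<bar>b\<bar> + \<bar>c\<bar>" for a b c :: real by arith
    have e1: "\<bar>- \<Gamma> * U * Ps\<bar> = \<Gamma> * \<bar>U * Ps\<bar>" using assms(9) by (simp add: abs_mult)
    have e2: "\<bar>2 * s * Q * Ps\<^sup>2\<bar> = 2 * s * \<bar>Q * Ps\<^sup>2\<bar>" using assms(7) by (simp add: abs_mult)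
    have e3: "\<bar>4 * s * (1 - s) * H * Ps\<^sup>2\<bar> = 4 * s * (1 - s) * (\<bar>H\<bar> * Ps\<^sup>2)" using assms(7,8) by (simp add: abs_mult)
    show ?thesis using t[of "- \<Gamma> * U * Ps" "2 * s * Q * Ps\<^sup>2" "4 * s * (1 - s) * H * Ps\<^sup>2"] e1 e2 e3 by simp
  qed
  also have "\<dots> \<le> \<Gamma> * (C * C * W * \<delta>) + 2 * s * (C * \<delta>) + 4 * s * (1 - s) * (Hb * (C * C * W * \<delta>))"
    using assms a1 a2 Hb0 by (intro add_mono mult_left_mono mult_mono) auto
  also have "\<dots> = (\<Gamma> * C * C * W + 2 * s * C + 4 * s * (1 - s) * Hb * C * C * W) * \<delta>"
    by (simp add: algebra_simps)
  finally show ?thesis .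
qed



lemma core:
  fixes V ph ph' u u' :: "real \<Rightarrow> real" and L R l1 l2 s \<beta> D :: real
  assumes LR: "L < R"
  and Vc: "continuous_on {L..R} V"
  and phc: "continuous_on {L..R} ph" and uc: "continuous_on {L..R} u"
  and phL: "ph L = 0" and uL: "u L = 0" and phR: "ph R = 0" and uR: "u R = 0"
  and dph: "\<And>x. x \<in> {L<..<R} \<Longrightarrow> (ph has_real_derivative ph' x) (at x)"
  and d2ph: "\<And>x. x \<in> {L<..<R} \<Longrightarrow> (ph' has_real_derivative (V x - l1) * ph x) (at x)"
  and du: "\<And>x. x \<in> {L<..<R} \<Longrightarrow> (u has_real_derivative u' x) (at x)"
  and d2u: "\<And>x. x \<in> {L<..<R} \<Longrightarrow> (u' has_real_derivative (V x - l2) * u x) (at x)"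
  and pos: "\<And>x. x \<in> {L<..<R} \<Longrightarrow> ph x > 0"
  and unz: "\<exists>x\<in>{L<..<R}. u x \<noteq> 0"
  and gap: "l1 < l2"
  and beta: "\<And>x. x \<in> {L<..<R} \<Longrightarrow> \<beta> \<le> - (V x - l1 - (ph' x / ph x)\<^sup>2)"
  and s: "0 < s" "s < 1"
  and Dd: "R - L < D"
  shows "4 * s * (1 - s) * (pi / D)\<^sup>2 + 2 * s * \<beta> \<le> l2 - l1"
proof (rule ccontr)
  define I where "I = {L<..<R}"
  define \<Gamma> where "\<Gamma> = l2 - l1"
  define K where "K = (pi / D)\<^sup>2"
  define B where "B = 4 * s * (1 - s) * K + 2 * s * \<beta>"
  assume "\<not> 4 * s * (1 - s) * (pi / D)\<^sup>2 + 2 * s * \<beta> \<le> l2 - l1"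
  then have BG: "B - \<Gamma> > 0" unfolding B_def K_def \<Gamma>_def by simp
  have G0: "\<Gamma> > 0" using gap unfolding \<Gamma>_def by simp
  have D0: "D > 0" using Dd LR by simp
  obtain MV where MV: "\<And>x. x \<in> {L..R} \<Longrightarrow> \<bar>V x\<bar> \<le> MV" using cont_bounded[OF Vc] by blast
  obtain Mph where Mph: "\<And>x. x \<in> {L..R} \<Longrightarrow> \<bar>ph x\<bar> \<le> Mph" using cont_bounded[OF phc] by blast
  obtain Mu where Mu: "\<And>x. x \<in> {L..R} \<Longrightarrow> \<bar>u x\<bar> \<le> Mu" using cont_bounded[OF uc] by blast
  have sub: "x \<in> {L..R}" if "x \<in> {L<..<R}" for x using that by auto
  obtain P1 where P1: "\<And>x. x \<in> {L<..<R} \<Longrightarrow> \<bar>ph' x\<bar> \<le> P1"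
  proof -
    have "\<exists>P. \<forall>x\<in>{L<..<R}. \<bar>ph' x\<bar> \<le> P"
    proof (rule interior_bounded[OF LR d2ph])
      fix x assume x: "x \<in> {L<..<R}"
      have "\<bar>(V x - l1) * ph x\<bar> = \<bar>V x - l1\<bar> * \<bar>ph x\<bar>" by (simp add: abs_mult)
      also have "\<dots> \<le> (MV + \<bar>l1\<bar>) * Mph"
        using MV[OF sub[OF x]] Mph[OF sub[OF x]] by (intro mult_mono) auto
      finally show "\<bar>(V x - l1) * ph x\<bar> \<le> (MV + \<bar>l1\<bar>) * Mph" .
    qed auto
    then show ?thesis using that by blast
  qed
  obtain P2 where P2: "\<And>x. x \<in> {L<..<R} \<Longrightarrow> \<bar>u' x\<bar> \<le> P2"
  proof -
    have "\<exists>P. \<forall>x\<in>{L<..<R}. \<bar>u' x\<bar> \<le> P"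
    proof (rule interior_bounded[OF LR d2u])
      fix x assume x: "x \<in> {L<..<R}"
      have "\<bar>(V x - l2) * u x\<bar> = \<bar>V x - l2\<bar> * \<bar>u x\<bar>" by (simp add: abs_mult)
      also have "\<dots> \<le> (MV + \<bar>l2\<bar>) * Mu"
        using MV[OF sub[OF x]] Mu[OF sub[OF x]] by (intro mult_mono) auto
      finally show "\<bar>(V x - l2) * u x\<bar> \<le> (MV + \<bar>l2\<bar>) * Mu" .
    qed auto
    then show ?thesis using that by blast
  qed
  define P where "P = max (max P1 P2) Mu"
  have bnd: "\<bar>ph' x\<bar> \<le> P \<and> \<bar>u' x\<bar> \<le> P \<and> \<bar>u x\<bar> \<le> P" if "x \<in> {L<..<R}" for x
    using P1[OF that] P2[OF that] Mu[OF sub[OF that]] unfolding P_def by auto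
  obtain e where e: "e > 0" "\<And>x. x \<in> {L<..<R} \<Longrightarrow> e \<le> (ph x)\<^sup>2 + (ph' x)\<^sup>2"
  proof -
    have "\<exists>e>0. \<forall>x\<in>{L<..<R}. e \<le> (ph x)\<^sup>2 + (ph' x)\<^sup>2"
    proof (rule gronwall_pos[where E'="\<lambda>x. 2 * ph x * ph' x + 2 * ph' x * ((V x - l1) * ph x)" and K="1 + MV + \<bar>l1\<bar>"])
      show "L < R" by fact
      fix x assume x: "x \<in> {L<..<R}"
      show "((\<lambda>x. (ph x)\<^sup>2 + (ph' x)\<^sup>2) has_real_derivative 2 * ph x * ph' x + 2 * ph' x * ((V x - l1) * ph x)) (at x)"
        using dph[OF x] d2ph[OF x] by (auto intro!: derivative_eq_intros)
      show "(ph x)\<^sup>2 + (ph' x)\<^sup>2 > 0" using pos[OF x] by (simp add: add_pos_nonneg)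
      have sq: "0 \<le> (\<bar>ph x\<bar> - \<bar>ph' x\<bar>)\<^sup>2" by simp
      have f1: "\<bar>2 * ph x * ph' x\<bar> \<le> (ph x)\<^sup>2 + (ph' x)\<^sup>2"
        using sq unfolding power2_diff by (simp add: abs_mult)
      have f2: "2 * ph x * ph' x + 2 * ph' x * ((V x - l1) * ph x) = (2 * ph x * ph' x) * (1 + V x - l1)"
        by (simp add: algebra_simps)
      have f3: "\<bar>1 + V x - l1\<bar> \<le> 1 + MV + \<bar>l1\<bar>" using MV[OF sub[OF x]] by linarith
      have "\<bar>(2 * ph x * ph' x) * (1 + V x - l1)\<bar> = \<bar>2 * ph x * ph' x\<bar> * \<bar>1 + V x - l1\<bar>" by (rule abs_mult)
      also have "\<dots> \<le> ((ph x)\<^sup>2 + (ph' x)\<^sup>2) * (1 + MV + \<bar>l1\<bar>)"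
        by (rule mult_mono) (use f1 f3 in auto)
      finally show "\<bar>2 * ph x * ph' x + 2 * ph' x * ((V x - l1) * ph x)\<bar> \<le> (1 + MV + \<bar>l1\<bar>) * ((ph x)\<^sup>2 + (ph' x)\<^sup>2)"
        using f2 by (simp add: mult.commute)
    qed
    then show ?thesis using that by blast
  qed
  obtain \<eta>R CR where \<eta>R: "\<eta>R > 0" and CR: "\<forall>x\<in>{L<..<R}. R - \<eta>R < x \<longrightarrow>
           \<bar>u x\<bar> \<le> CR * (R - x) \<and> \<bar>u' x - ph' x / ph x * u x\<bar> \<le> CR * (R - x) \<and>
           \<bar>ph' x / ph x * (u' x - ph' x / ph x * u x)\<^sup>2\<bar> \<le> CR * (R - x)"
    using end_right[OF LR phc uc phR uR dph d2ph du d2u pos bnd e] by blast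
  obtain \<eta>L CL where \<eta>L: "\<eta>L > 0" and CL: "\<forall>x\<in>{L<..<R}. x < L + \<eta>L \<longrightarrow>
           \<bar>u x\<bar> \<le> CL * (x - L) \<and> \<bar>u' x - ph' x / ph x * u x\<bar> \<le> CL * (x - L) \<and>
           \<bar>ph' x / ph x * (u' x - ph' x / ph x * u x)\<^sup>2\<bar> \<le> CL * (x - L)"
    using end_left[OF LR phc uc phL uL dph d2ph du d2u pos bnd e] by blast
  define c where "c = (L + R) / 2"
  define q where "q x = ph' x / ph x" for x
  define psi where "psi x = u' x - q x * u x" for x
  define h where "h x = (pi / D) * tan (pi * (x - c) / D)" for x
  define G where "G x = - \<Gamma> * u x * psi x - 2 * s * q x * (psi x)\<^sup>2 + 4 * s * (1 - s) * h x * (psi x)\<^sup>2" for x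
  define psid where "psid x = - \<Gamma> * u x - q x * psi x" for x
  define qd where "qd x = V x - l1 - (q x)\<^sup>2" for x
  define hd where "hd x = K + (h x)\<^sup>2" for x
  define Gd where "Gd x = - \<Gamma> * (u' x * psi x + u x * psid x) - 2 * s * (qd x * (psi x)\<^sup>2 + q x * (2 * psi x * psid x))
           + 4 * s * (1 - s) * (hd x * (psi x)\<^sup>2 + h x * (2 * psi x * psid x))" for x
  have cosp: "cos (pi * (x - c) / D) > 0" if "x \<in> {L..R}" for x
  proof (rule cos_gt_zero_pi)
    have a: "2 * (x - c) < D" "- D < 2 * (x - c)" using that Dd unfolding c_def by (auto simp: field_simps)
    have "pi * (2 * (x - c)) < pi * D" using a by (intro mult_strict_left_mono) auto
    then show "pi * (x - c) / D < pi / 2" using D0 by (simp add: field_simps)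
    have "pi * (- D) < pi * (2 * (x - c))" using a by (intro mult_strict_left_mono) auto
    then show "- (pi / 2) < pi * (x - c) / D" using D0 by (simp add: field_simps)
  qed
  have dh: "(h has_real_derivative hd x) (at x)" if "x \<in> {L..R}" for x
  proof -
    have cz: "cos (pi * (x - c) / D) \<noteq> 0" using cosp[OF that] by simp
    have "((\<lambda>x. tan (pi * (x - c) / D)) has_real_derivative inverse ((cos (pi * (x - c) / D))\<^sup>2) * (pi / D)) (at x)"
      by (rule DERIV_chain2[of tan _ "\<lambda>x. pi * (x - c) / D", OF DERIV_tan[OF cz]]) (use D0 in \<open>auto intro!: derivative_eq_intros\<close>)
    then have "(h has_real_derivative (pi / D) * (inverse ((cos (pi * (x - c) / D))\<^sup>2) * (pi / D))) (at x)"
      unfolding h_def by (rule DERIV_cmult)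
    moreover have "(pi / D) * (inverse ((cos (pi * (x - c) / D))\<^sup>2) * (pi / D)) = hd x"
    proof -
      have "inverse ((cos (pi * (x - c) / D))\<^sup>2) = 1 + (tan (pi * (x - c) / D))\<^sup>2"
        using tan_sec[OF cz] by (simp add: power_inverse)
      then show ?thesis unfolding hd_def h_def K_def by (simp add: power2_eq_square algebra_simps)
    qed
    ultimately show ?thesis by simp
  qed
  obtain Hb where Hb: "\<And>x. x \<in> {L..R} \<Longrightarrow> \<bar>h x\<bar> \<le> Hb"
  proof -
    have "continuous_on {L..R} h" by (rule has_real_derivative_imp_continuous_on) (rule dh)
    then show ?thesis using cont_bounded that by blast
  qed
  have dq: "(q has_real_derivative qd x) (at x)" if x: "x \<in> I" for x
  proof -
    have xI: "x \<in> {L<..<R}" using x unfolding I_def .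
    have p0: "ph x \<noteq> 0" using pos[OF xI] by simp
    have "(q has_real_derivative ((V x - l1) * ph x * ph x - ph' x * ph' x) / (ph x * ph x)) (at x)"
      unfolding q_def by (rule DERIV_divide[OF d2ph[OF xI] dph[OF xI] p0])
    moreover have "((V x - l1) * ph x * ph x - ph' x * ph' x) / (ph x * ph x) = qd x"
      unfolding qd_def q_def using p0 by (simp add: field_simps power2_eq_square)
    ultimately show ?thesis by simp
  qed
  have dpsi: "(psi has_real_derivative psid x) (at x)" if x: "x \<in> I" for x
  proof -
    have xI: "x \<in> {L<..<R}" using x unfolding I_def .
    have "(psi has_real_derivative (V x - l2) * u x - (qd x * u x + u' x * q x)) (at x)"
      unfolding psi_def by (intro DERIV_diff DERIV_mult d2u[OF xI] du[OF xI] dq[OF x])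
    moreover have "(V x - l2) * u x - (qd x * u x + u' x * q x) = psid x"
      unfolding psid_def qd_def psi_def \<Gamma>_def by (simp add: algebra_simps power2_eq_square)
    ultimately show ?thesis by simp
  qed
  have dG: "(G has_real_derivative Gd x) (at x)" if x: "x \<in> I" for x
  proof -
    have xI: "x \<in> {L<..<R}" using x unfolding I_def .
    have xc: "x \<in> {L..R}" using xI by auto
    show ?thesis unfolding G_def Gd_def
      by (rule derivative_eq_intros du[OF xI] dpsi[OF x] dq[OF x] dh[OF xc] refl | simp)+
         (simp add: algebra_simps power2_eq_square)
  qed
  have Gdpos: "Gd x \<ge> (B - \<Gamma>) * (psi x)\<^sup>2" if x: "x \<in> I" for x
  proof -
    have xI: "x \<in> {L<..<R}" using x unfolding I_def .
    have id: "Gd x - ((4 * s * (1 - s) * K + 2 * s * \<beta>) - \<Gamma>) * (psi x)\<^sup>2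
       = ((1 - 2 * s) * psid x + q x * psi x)\<^sup>2 + 4 * s * (1 - s) * (psid x + h x * psi x)\<^sup>2
         + 2 * s * (- qd x - \<beta>) * (psi x)\<^sup>2"
      unfolding Gd_def
      by (rule alg_identity[where V="V x" and ?l1.0=l1]) (auto simp: psi_def psid_def qd_def hd_def)
    have "- qd x - \<beta> \<ge> 0" using beta[OF xI] unfolding qd_def q_def by simp
    then have "0 \<le> ((1 - 2 * s) * psid x + q x * psi x)\<^sup>2 + 4 * s * (1 - s) * (psid x + h x * psi x)\<^sup>2
         + 2 * s * (- qd x - \<beta>) * (psi x)\<^sup>2" using s by (intro add_nonneg_nonneg mult_nonneg_nonneg) auto
    then show ?thesis using id unfolding B_def by simp
  qed
  have mono: "G x \<le> G y" if "x \<in> I" "y \<in> I" "x \<le> y" for x y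
  proof (rule DERIV_nonneg_imp_increasing_open[OF \<open>x \<le> y\<close>])
    fix t assume t: "x < t" "t < y"
    then have tI: "t \<in> I" using that unfolding I_def by auto
    have "Gd t \<ge> 0" using Gdpos[OF tI] BG by (meson order_trans zero_le_power2 mult_nonneg_nonneg less_imp_le)
    then show "\<exists>y. DERIV G t :> y \<and> 0 \<le> y" using dG[OF tI] by blast
  next
    show "continuous_on {x..y} G"
      by (rule deriv_cont_sub[where S=I]) (use dG that in \<open>auto simp: I_def\<close>)
  qed
  have Gbnd: "\<bar>G x\<bar> \<le> (\<Gamma> * C * C * (R - L) + 2 * s * C + 4 * s * (1 - s) * Hb * C * C * (R - L)) * \<delta>"
    if "\<bar>u x\<bar> \<le> C * \<delta>" "\<bar>psi x\<bar> \<le> C * \<delta>" "\<bar>q x * (psi x)\<^sup>2\<bar> \<le> C * \<delta>" "x \<in> {L..R}" "0 < \<delta>" "\<delta> \<le> R - L" for x C \<delta>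
    unfolding G_def using G_bound[OF that(1-3) Hb[OF that(4)] that(5,6) s] G0 by (simp add: mult.assoc)
  define KR where "KR = \<bar>\<Gamma> * CR * CR * (R - L) + 2 * s * CR + 4 * s * (1 - s) * Hb * CR * CR * (R - L)\<bar>"
  define KL where "KL = \<bar>\<Gamma> * CL * CL * (R - L) + 2 * s * CL + 4 * s * (1 - s) * Hb * CL * CL * (R - L)\<bar>"
  have GR: "\<bar>G y\<bar> \<le> KR * (R - y)" if "y \<in> I" "R - \<eta>R < y" for y
  proof -
    have yI: "y \<in> {L<..<R}" using that unfolding I_def by simp
    have "\<bar>G y\<bar> \<le> (\<Gamma> * CR * CR * (R - L) + 2 * s * CR + 4 * s * (1 - s) * Hb * CR * CR * (R - L)) * (R - y)"
      by (rule Gbnd) (use CR that yI in \<open>auto simp: psi_def q_def\<close>)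
    also have "\<dots> \<le> KR * (R - y)" unfolding KR_def using yI by (intro mult_right_mono) auto
    finally show ?thesis .
  qed
  have GL: "\<bar>G y\<bar> \<le> KL * (y - L)" if "y \<in> I" "y < L + \<eta>L" for y
  proof -
    have yI: "y \<in> {L<..<R}" using that unfolding I_def by simp
    have "\<bar>G y\<bar> \<le> (\<Gamma> * CL * CL * (R - L) + 2 * s * CL + 4 * s * (1 - s) * Hb * CL * CL * (R - L)) * (y - L)"
      by (rule Gbnd) (use CL that yI in \<open>auto simp: psi_def q_def\<close>)
    also have "\<dots> \<le> KL * (y - L)" unfolding KL_def using yI by (intro mult_right_mono) auto
    finally show ?thesis .
  qed
  have Gzero: "G x = 0" if x: "x \<in> I" for x
  proof -
    have "G x \<le> 0"
    proof (rule le_lim_right[of "max x (R - \<eta>R)" R KR])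
      show "max x (R - \<eta>R) < R" using x \<eta>R unfolding I_def by auto
      show "0 \<le> KR" unfolding KR_def by simp
      fix y assume y: "max x (R - \<eta>R) < y" "y < R"
      have yI: "y \<in> I" using x y unfolding I_def by auto
      have "G x \<le> G y" using mono[OF x yI] y by simp
      then show "G x \<le> 0 + KR * (R - y)" using GR[OF yI] y by simp
    qed
    moreover have "0 \<le> G x"
    proof (rule le_lim_left[of L "min x (L + \<eta>L)" KL])
      show "L < min x (L + \<eta>L)" using x \<eta>L unfolding I_def by auto
      show "0 \<le> KL" unfolding KL_def by simp
      fix y assume y: "L < y" "y < min x (L + \<eta>L)"
      have yI: "y \<in> I" using x y unfolding I_def by auto
      have "G y \<le> G x" using mono[OF yI x] y by simp
      then show "0 \<le> G x + KL * (y - L)" using GL[OF yI] y by simp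
    qed
    ultimately show ?thesis by simp
  qed
  have zero_deriv: "f' = 0" if "(f has_real_derivative f') (at x)" "x \<in> I" "\<And>y. y \<in> I \<Longrightarrow> f y = 0" for f f' x
  proof -
    have "((\<lambda>_. 0) has_real_derivative f') (at x)"
      by (rule has_field_derivative_transform_within_open[OF that(1) _ that(2)]) (use that(3) in \<open>auto simp: I_def\<close>)
    then show ?thesis using DERIV_const DERIV_unique by blast
  qed
  have psi0: "psi x = 0" if x: "x \<in> I" for x
  proof -
    have "Gd x = 0" by (rule zero_deriv[OF dG[OF x] x Gzero])
    then have "(B - \<Gamma>) * (psi x)\<^sup>2 \<le> 0" using Gdpos[OF x] by simp
    then have "(psi x)\<^sup>2 \<le> 0" using BG by (simp add: mult_le_0_iff)
    then show ?thesis by simp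
  qed
  have u0: "u x = 0" if x: "x \<in> I" for x
  proof -
    have "psid x = 0" by (rule zero_deriv[OF dpsi[OF x] x psi0])
    then show ?thesis using psi0[OF x] G0 unfolding psid_def by simp
  qed
  show False using unz u0 unfolding I_def by blast
qed



lemma limit_D:
  fixes A b \<Gamma> d :: real
  assumes "d > 0" "\<And>D. d < D \<Longrightarrow> A * (pi / D)\<^sup>2 + b \<le> \<Gamma>"
  shows "A * (pi / d)\<^sup>2 + b \<le> \<Gamma>"
proof (rule tendsto_upperbound)
  show "((\<lambda>D. A * (pi / D)\<^sup>2 + b) \<longlongrightarrow> A * (pi / d)\<^sup>2 + b) (at_right d)"
    using assms(1) by (auto intro!: tendsto_intros)
  show "\<forall>\<^sub>F D in at_right d. A * (pi / D)\<^sup>2 + b \<le> \<Gamma>"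
    using assms(2) eventually_at_right_less by (metis (mono_tags, lifting) eventually_mono)
  show "at_right d \<noteq> bot" by simp
qed

theorem mainTheorem5:
  fixes V V' :: "real \<Rightarrow> real" and d lam1 lam2 s :: real and phi1 :: "real \<Rightarrow> real"
  assumes d_pos: "d > 0"
    and V_C1: "\<forall>x\<in>{-d/2..d/2}. (V has_real_derivative V' x) (at x within {-d/2..d/2})"
    and V'_cont: "continuous_on {-d/2..d/2} V'"
    and V_even: "\<forall>x\<in>{-d/2..d/2}. V (-x) = V x"
    and lam1: "first_dirichlet_eigenvalue V d lam1"
    and lam2: "second_dirichlet_eigenvalue V d lam2"
    and phi1: "dirichlet_eigenfunction V d lam1 phi1"
    and phi1_pos: "\<forall>x\<in>{-d/2<..<d/2}. phi1 x > 0"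
    and s: "0 < s" "s < 1"
  shows "lam2 - lam1 \<ge> 4 * s * (1 - s) * pi\<^sup>2 / d\<^sup>2
            + 2 * s * (- (SUP t\<in>{-d/2<..<d/2}. deriv (deriv (\<lambda>x. ln (phi1 x))) t))
       \<and> lam2 \<ge> (1 + 2 * s) * lam1 + 4 * s * (1 - s) * pi\<^sup>2 / d\<^sup>2
            + 2 * s * (INF t\<in>{-d/2<..<d/2}. (deriv phi1 t / phi1 t)\<^sup>2 - V t)"
proof -
  define L where "L = - d / 2"
  define R where "R = d / 2"
  have LR: "L < R" using d_pos unfolding L_def R_def by simp
  have RL: "R - L = d" unfolding L_def R_def by simp
  obtain lam1' where l1': "first_dirichlet_eigenvalue V d lam1'" "lam1' < lam2" "dirichlet_eigenvalue V d lam2"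
    using lam2 unfolding second_dirichlet_eigenvalue_def by blast
  have "lam1 = lam1'" using lam1 l1'(1) unfolding first_dirichlet_eigenvalue_def by (meson order_antisym)
  then have gap: "lam1 < lam2" using l1' by simp
  obtain u where u: "dirichlet_eigenfunction V d lam2 u"
    using l1'(3) unfolding dirichlet_eigenvalue_def by blast
  have Vc: "continuous_on {L..R} V"
    unfolding L_def R_def by (rule DERIV_continuous_on) (use V_C1 in auto)
  have ef: "continuous_on {L..R} f \<and> f L = 0 \<and> f R = 0 \<and> (\<exists>x\<in>{L<..<R}. f x \<noteq> 0) \<and>
     (\<forall>x\<in>{L<..<R}. (f has_real_derivative deriv f x) (at x) \<and>
         (deriv f has_real_derivative (V x - lam) * f x) (at x))"
    if "dirichlet_eigenfunction V d lam f" for lam f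
  proof -
    have h: "continuous_on {L..R} f" "f L = 0" "f R = 0" "\<exists>x\<in>{L<..<R}. f x \<noteq> 0"
       "\<And>x. x \<in> {L<..<R} \<Longrightarrow> f differentiable at x \<and> deriv f differentiable at x \<and>
        - deriv (deriv f) x + V x * f x = lam * f x"
      using that unfolding dirichlet_eigenfunction_def L_def R_def by auto
    have "(f has_real_derivative deriv f x) (at x) \<and> (deriv f has_real_derivative (V x - lam) * f x) (at x)"
      if x: "x \<in> {L<..<R}" for x
    proof -
      have a: "f differentiable at x" "deriv f differentiable at x" "- deriv (deriv f) x + V x * f x = lam * f x"
        using h(5)[OF x] by auto
      have "(deriv f has_real_derivative deriv (deriv f) x) (at x)"
        using a(2) DERIV_deriv_iff_real_differentiable by blast
      moreover have "deriv (deriv f) x = (V x - lam) * f x" using a(3) by (simp add: algebra_simps)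
      ultimately show ?thesis using a(1) DERIV_deriv_iff_real_differentiable by auto
    qed
    then show ?thesis using h by blast
  qed
  note P = ef[OF phi1] and U = ef[OF u]
  have pos: "\<And>x. x \<in> {L<..<R} \<Longrightarrow> phi1 x > 0" using phi1_pos unfolding L_def R_def by auto
  obtain MV where MV: "\<And>x. x \<in> {L..R} \<Longrightarrow> \<bar>V x\<bar> \<le> MV" using cont_bounded[OF Vc] by blast
  define I where "I = {L<..<R}"
  define q where "q x = deriv phi1 x / phi1 x" for x
  define qd where "qd x = V x - lam1 - (q x)\<^sup>2" for x
  have dq: "(q has_real_derivative qd x) (at x)" if xI: "x \<in> I" for x
  proof -
    have x: "x \<in> {L<..<R}" using xI unfolding I_def .
    have p0: "phi1 x \<noteq> 0" using pos[OF x] by simp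
    have "(q has_real_derivative ((V x - lam1) * phi1 x * phi1 x - deriv phi1 x * deriv phi1 x) / (phi1 x * phi1 x)) (at x)"
      unfolding q_def using P x by (intro DERIV_divide p0) auto
    moreover have "((V x - lam1) * phi1 x * phi1 x - deriv phi1 x * deriv phi1 x) / (phi1 x * phi1 x) = qd x"
      unfolding qd_def q_def using p0 by (simp add: field_simps power2_eq_square)
    ultimately show ?thesis by simp
  qed
  have dln: "deriv (\<lambda>x. ln (phi1 x)) y = q y" if y: "y \<in> I" for y
  proof -
    have x: "y \<in> {L<..<R}" using y unfolding I_def .
    have "((\<lambda>x. ln (phi1 x)) has_real_derivative deriv phi1 y / phi1 y) (at y)"
      using P x pos[OF x] by (auto intro!: derivative_eq_intros simp: field_simps)
    then show ?thesis unfolding q_def by (rule DERIV_imp_deriv)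
  qed
  have d2ln: "deriv (deriv (\<lambda>x. ln (phi1 x))) t = qd t" if t: "t \<in> I" for t
  proof -
    have "(deriv (\<lambda>x. ln (phi1 x)) has_real_derivative qd t) (at t)"
      by (rule has_field_derivative_transform_within_open[OF dq[OF t] _ t]) (use dln in \<open>auto simp: I_def\<close>)
    then show ?thesis by (rule DERIV_imp_deriv)
  qed
  have main: "4 * s * (1 - s) * (pi / d)\<^sup>2 + 2 * s * \<beta> \<le> lam2 - lam1"
    if beta: "\<And>x. x \<in> I \<Longrightarrow> \<beta> \<le> - qd x" for \<beta>
  proof (rule limit_D[OF d_pos])
    fix D assume D: "d < D"
    show "4 * s * (1 - s) * (pi / D)\<^sup>2 + 2 * s * \<beta> \<le> lam2 - lam1"
    proof (rule core[where V=V and ph=phi1 and ph'="deriv phi1" and u=u and u'="deriv u" and L=L and R=R])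
      show "\<beta> \<le> - (V x - lam1 - (deriv phi1 x / phi1 x)\<^sup>2)" if "x \<in> {L<..<R}" for x
        using beta[of x] that unfolding I_def qd_def q_def by auto
    qed (use LR Vc P U pos gap s D RL in auto)
  qed
  have Isub: "x \<in> {L..R}" if "x \<in> I" for x using that unfolding I_def by auto
  have Ine: "I \<noteq> {}" using LR unfolding I_def by auto
  have bddA: "bdd_above ((\<lambda>t. deriv (deriv (\<lambda>x. ln (phi1 x))) t) ` I)"
  proof (rule bdd_aboveI2[where M="MV - lam1"])
    fix t assume t: "t \<in> I"
    show "deriv (deriv (\<lambda>x. ln (phi1 x))) t \<le> MV - lam1"
      using d2ln[OF t] MV[OF Isub[OF t]] unfolding qd_def by (smt (verit) zero_le_power2 abs_le_iff)
  qed
  have bddB: "bdd_below ((\<lambda>t. (deriv phi1 t / phi1 t)\<^sup>2 - V t) ` I)"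
  proof (rule bdd_belowI2[where m="- MV"])
    fix t assume t: "t \<in> I"
    show "- MV \<le> (deriv phi1 t / phi1 t)\<^sup>2 - V t"
      using MV[OF Isub[OF t]] by (smt (verit) zero_le_power2 abs_le_iff)
  qed
  have r1: "4 * s * (1 - s) * (pi / d)\<^sup>2 + 2 * s * (- (SUP t\<in>I. deriv (deriv (\<lambda>x. ln (phi1 x))) t)) \<le> lam2 - lam1"
  proof (rule main)
    fix x assume x: "x \<in> I"
    have "deriv (deriv (\<lambda>x. ln (phi1 x))) x \<le> (SUP t\<in>I. deriv (deriv (\<lambda>x. ln (phi1 x))) t)"
      by (rule cSUP_upper[OF x bddA])
    then show "- (SUP t\<in>I. deriv (deriv (\<lambda>x. ln (phi1 x))) t) \<le> - qd x" using d2ln[OF x] by simp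
  qed
  have r2: "4 * s * (1 - s) * (pi / d)\<^sup>2 + 2 * s * (lam1 + (INF t\<in>I. (deriv phi1 t / phi1 t)\<^sup>2 - V t)) \<le> lam2 - lam1"
  proof (rule main)
    fix x assume x: "x \<in> I"
    have "(INF t\<in>I. (deriv phi1 t / phi1 t)\<^sup>2 - V t) \<le> (deriv phi1 x / phi1 x)\<^sup>2 - V x"
      by (rule cINF_lower[OF bddB x])
    then show "lam1 + (INF t\<in>I. (deriv phi1 t / phi1 t)\<^sup>2 - V t) \<le> - qd x"
      unfolding qd_def q_def by simp
  qed
  have I_eq: "I = {-d/2<..<d/2}" unfolding I_def L_def R_def by simp
  have pd: "4 * s * (1 - s) * pi\<^sup>2 / d\<^sup>2 = 4 * s * (1 - s) * (pi / d)\<^sup>2" by (simp add: power_divide)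
  define X where "X = 4 * s * (1 - s) * (pi / d)\<^sup>2"
  define J where "J = (INF t\<in>I. (deriv phi1 t / phi1 t)\<^sup>2 - V t)"
  have r2': "X + 2 * s * (lam1 + J) \<le> lam2 - lam1" using r2 unfolding X_def J_def .
  have "(1 + 2 * s) * lam1 + X + 2 * s * J \<le> lam2" using r2' by (simp add: algebra_simps)
  then show ?thesis
    using r1 unfolding I_eq pd X_def J_def by simp
qed


end
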